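(* Let $\alpha\ge0$, $\mu\ge0$. For every uniformly continuous function $g$ on $[0,\infty)$, every $n\in\mathbb{N}$ and every $x\in[0,\infty)$, $$|T_n(g;x)-g(x)|\le\left(1+\sqrt{\frac1n x\left(4x^3\alpha^2+4x\alpha+n\right)+2\mu x\frac{e_\mu(-nx)}{e_\mu(nx)}}\right)\omega\!\left(g;\frac{1}{\sqrt n}\right).$$
   Context: The modulus of continuity is $\omega(g;\delta)=\sup\{|g(s)-g(t)|: s,t\in[0,\infty),\ |s-t|\le\delta\}$. For $\mu>-\tfrac12$ define $\gamma_\mu(2k)=\dfrac{2^{2k}k!\,\Gamma(k+\mu+1/2)}{\Gamma(\mu+1/2)}$ and $\gamma_\mu(2k+1)=\dfrac{2^{2k+1}k!\,\Gamma(k+\mu+3/2)}{\Gamma(\mu+1/2)}$, $k\ge0$; $e_\mu(x)=\sum_{k\ge0} x^k/\gamma_\mu(k)$; $\theta_k=0$ if $k$ is even and $\theta_k=1$ if $k$ is odd. Let $h_k^\mu(\xi,\alpha)=\gamma_\mu(k)\sum_{j=0}^{\lfloor k/2\rfloor}\dfrac{\alpha^j\xi^{k-2j}}{j!\,\gamma_\mu(k-2j)}$. For $\alpha\ge0,\mu\ge0$, $n\in\mathbb{N}$ and $x\in[0,\infty)$ define $$T_n(f;x)=\frac{1}{e^{\alpha x^2}e_\mu(nx)}\sum_{k=0}^\infty \frac{h_k^\mu(n,\alpha)}{\gamma_\mu(k)}x^k f\!\left(\frac{k+2\mu\theta_k}{n}\right).$$ *)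

theory Defs
  imports "HOL-Analysis.Analysis"
begin

definition modcont :: "(real \<Rightarrow> real) \<Rightarrow> real \<Rightarrow> real" where
  "modcont g \<delta> = Sup {\<bar>g s - g t\<bar> | s t. s \<ge> 0 \<and> t \<ge> 0 \<and> \<bar>s - t\<bar> \<le> \<delta>}"

definition gam :: "real \<Rightarrow> nat \<Rightarrow> real" where
  "gam \<mu> k = (if even k
     then 2 ^ k * fact (k div 2) * Gamma (real (k div 2) + \<mu> + 1/2) / Gamma (\<mu> + 1/2)
     else 2 ^ k * fact (k div 2) * Gamma (real (k div 2) + \<mu> + 3/2) / Gamma (\<mu> + 1/2))"

definition emu :: "real \<Rightarrow> real \<Rightarrow> real" where
  "emu \<mu> x = (\<Sum>k. x ^ k / gam \<mu> k)"

definition theta :: "nat \<Rightarrow> real" where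
  "theta k = (if even k then 0 else 1)"

definition hpol :: "real \<Rightarrow> nat \<Rightarrow> real \<Rightarrow> real \<Rightarrow> real" where
  "hpol \<mu> k \<xi> \<alpha> = gam \<mu> k *
     (\<Sum>j=0..k div 2. \<alpha> ^ j * \<xi> ^ (k - 2*j) / (fact j * gam \<mu> (k - 2*j)))"

definition Top :: "real \<Rightarrow> real \<Rightarrow> nat \<Rightarrow> (real \<Rightarrow> real) \<Rightarrow> real \<Rightarrow> real" where
  "Top \<alpha> \<mu> n f x = 1 / (exp (\<alpha> * x^2) * emu \<mu> (real n * x)) *
     (\<Sum>k. hpol \<mu> k (real n) \<alpha> / gam \<mu> k * x ^ k * f ((real k + 2 * \<mu> * theta k) / real n))"

end

theory Submission
  imports Defs
begin


lemma Gamma_succ: "z > (0::real) \<Longrightarrow> Gamma (z + 1) = z * Gamma z"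
  by (rule Gamma_plus1) (auto dest: nonpos_Ints_nonpos)

lemma gam0: "\<mu> \<ge> 0 \<Longrightarrow> gam \<mu> 0 = 1"
proof -
  assume "\<mu> \<ge> 0" then have "Gamma (\<mu> + 1/2) > 0" by simp
  then show ?thesis unfolding gam_def by simp
qed

lemma gamSuc: assumes "\<mu> \<ge> 0"
  shows "gam \<mu> (Suc k) = (real (Suc k) + 2 * \<mu> * theta (Suc k)) * gam \<mu> k"
proof (cases "even k")
  case True
  then obtain i where k: "k = 2*i" by blast
  have "Gamma (real i + \<mu> + 3/2) = (real i + \<mu> + 1/2) * Gamma (real i + \<mu> + 1/2)"
    using Gamma_succ[of "real i + \<mu> + 1/2"] assms by (simp add: add.assoc)
  moreover have "Gamma (\<mu> + 1/2) > 0" using assms by simp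
  ultimately show ?thesis unfolding gam_def theta_def k
    by (simp add: divide_simps del: mult_2) (simp add: algebra_simps)
next
  case False
  then obtain i where k: "k = 2*i+1" using oddE by blast
  have s: "Suc k = 2 * Suc i" using k by simp
  have "Gamma (real (Suc i) + \<mu> + 1/2) = Gamma (real i + \<mu> + 3/2)"
    by (simp add: algebra_simps)
  moreover have "Gamma (\<mu> + 1/2) > 0" using assms by simp
  ultimately show ?thesis unfolding gam_def theta_def s using k
    by (simp add: divide_simps del: mult_2)
qed

lemma gam_ge_fact: assumes "\<mu> \<ge> 0" shows "gam \<mu> k \<ge> fact k"
proof (induction k)
  case 0 then show ?case using gam0[OF assms] by simp
next
  case (Suc k)
  have t: "theta (Suc k) \<ge> 0" by (simp add: theta_def)
  have "fact (Suc k) = real (Suc k) * fact k" by simp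
  also have "\<dots> \<le> (real (Suc k) + 2 * \<mu> * theta (Suc k)) * gam \<mu> k"
    apply (rule mult_mono) using Suc assms t by auto
  finally show ?case using gamSuc[OF assms] by simp
qed

lemma gam_pos: "\<mu> \<ge> 0 \<Longrightarrow> gam \<mu> k > 0"
  using gam_ge_fact[of \<mu> k] by (smt (verit) fact_gt_zero)

lemma sums_Suc_zero: "(\<lambda>k. (f::nat \<Rightarrow> real) (Suc k)) sums s \<Longrightarrow> f 0 = 0 \<Longrightarrow> f sums s"
  using sums_Suc_iff[of f s] by simp

definition bb :: "real \<Rightarrow> real \<Rightarrow> nat \<Rightarrow> real" where
  "bb \<mu> y m = y ^ m / gam \<mu> m"
definition qq :: "real \<Rightarrow> nat \<Rightarrow> nat \<Rightarrow> real" where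
  "qq \<mu> n m = (real m + 2 * \<mu> * theta m) / real n"
definition cc :: "real \<Rightarrow> nat \<Rightarrow> real" where
  "cc l i = (if even i then l ^ (i div 2) / fact (i div 2) else 0)"

lemma bb_abs_summable: assumes "\<mu> \<ge> 0" shows "summable (\<lambda>m. \<bar>bb \<mu> y m\<bar>)"
proof (rule summable_comparison_test')
  show "summable (\<lambda>m. \<bar>y\<bar> ^ m / fact m)"
    using exp_converges[of "\<bar>y\<bar>"] by (simp add: sums_iff divide_inverse mult.commute)
  fix m :: nat
  have "\<bar>bb \<mu> y m\<bar> = \<bar>y\<bar>^m / gam \<mu> m"
    unfolding bb_def using gam_pos[OF assms, of m] by (simp add: power_abs)
  also have "\<dots> \<le> \<bar>y\<bar>^m / fact m"
    by (rule divide_left_mono) (use gam_ge_fact[OF assms, of m] gam_pos[OF assms, of m] in auto)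
  finally show "norm \<bar>bb \<mu> y m\<bar> \<le> \<bar>y\<bar> ^ m / fact m" by simp
qed

lemma bb_sums: assumes "\<mu> \<ge> 0" shows "bb \<mu> y sums emu \<mu> y"
proof -
  have "summable (bb \<mu> y)" using bb_abs_summable[OF assms] summable_rabs_cancel by blast
  then show ?thesis unfolding emu_def bb_def[abs_def] by (simp add: summable_sums)
qed

lemma bb_Suc: assumes "\<mu> \<ge> 0"
  shows "bb \<mu> y (Suc k) * (real (Suc k) + 2 * \<mu> * theta (Suc k)) = y * bb \<mu> y k"
proof -
  have p: "real (Suc k) + 2 * \<mu> * theta (Suc k) > 0" using assms by (simp add: theta_def)
  show ?thesis unfolding bb_def gamSuc[OF assms] using p gam_pos[OF assms, of k] by simp
qed

lemma theta_Suc: "theta (Suc k) = theta k + (if even k then 1 else -1)"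
  by (simp add: theta_def)

lemma bb_neg: "bb \<mu> (-y) k = (if even k then 1 else -1) * bb \<mu> y k"
  unfolding bb_def by (simp add: power_minus')

lemma bbq_sums: assumes "\<mu> \<ge> 0" "n > 0"
  shows "(\<lambda>m. bb \<mu> (real n * x) m * qq \<mu> n m) sums (x * emu \<mu> (real n * x))"
proof -
  have "(\<lambda>k. bb \<mu> (real n * x) (Suc k) * qq \<mu> n (Suc k)) = (\<lambda>k. x * bb \<mu> (real n * x) k)"
  proof
    fix k
    have "bb \<mu> (real n * x) (Suc k) * qq \<mu> n (Suc k)
        = (bb \<mu> (real n * x) (Suc k) * (real (Suc k) + 2 * \<mu> * theta (Suc k))) / real n"
      unfolding qq_def by simp
    also have "\<dots> = x * bb \<mu> (real n * x) k" unfolding bb_Suc[OF assms(1)] using assms by simp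
    finally show "bb \<mu> (real n * x) (Suc k) * qq \<mu> n (Suc k) = x * bb \<mu> (real n * x) k" .
  qed
  moreover have "(\<lambda>k. x * bb \<mu> (real n * x) k) sums (x * emu \<mu> (real n * x))"
    by (rule sums_mult[OF bb_sums[OF assms(1)]])
  ultimately have "(\<lambda>k. (\<lambda>m. bb \<mu> (real n * x) m * qq \<mu> n m) (Suc k)) sums (x * emu \<mu> (real n * x))"
    by (simp only:)
  then show ?thesis by (rule sums_Suc_zero) (simp add: qq_def theta_def)
qed

lemma bbq2_sums: assumes "\<mu> \<ge> 0" "n > 0"
  shows "(\<lambda>m. bb \<mu> (real n * x) m * qq \<mu> n m ^ 2) sums
     (x * (x * emu \<mu> (real n * x)) + x / real n * (emu \<mu> (real n * x) + 2 * \<mu> * emu \<mu> (- (real n * x))))"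
proof -
  let ?y = "real n * x"
  have "(\<lambda>k. bb \<mu> ?y (Suc k) * qq \<mu> n (Suc k) ^ 2) =
     (\<lambda>k. x * (bb \<mu> ?y k * qq \<mu> n k) + x / real n * (bb \<mu> ?y k + 2 * \<mu> * bb \<mu> (-?y) k))"
  proof
    fix k
    have "bb \<mu> ?y (Suc k) * qq \<mu> n (Suc k) ^ 2
        = (bb \<mu> ?y (Suc k) * (real (Suc k) + 2 * \<mu> * theta (Suc k))) / real n * qq \<mu> n (Suc k)"
      unfolding qq_def by (simp add: power2_eq_square)
    also have "\<dots> = x * bb \<mu> ?y k * qq \<mu> n (Suc k)" unfolding bb_Suc[OF assms(1)] using assms by simp
    also have "\<dots> = x * (bb \<mu> ?y k * qq \<mu> n k) + x / real n * (bb \<mu> ?y k + 2 * \<mu> * bb \<mu> (-?y) k)"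
      unfolding qq_def theta_Suc bb_neg using assms by (simp add: field_simps)
    finally show "bb \<mu> ?y (Suc k) * qq \<mu> n (Suc k) ^ 2 =
       x * (bb \<mu> ?y k * qq \<mu> n k) + x / real n * (bb \<mu> ?y k + 2 * \<mu> * bb \<mu> (-?y) k)" .
  qed
  moreover have "(\<lambda>k. x * (bb \<mu> ?y k * qq \<mu> n k) + x / real n * (bb \<mu> ?y k + 2 * \<mu> * bb \<mu> (-?y) k))
     sums (x * (x * emu \<mu> ?y) + x / real n * (emu \<mu> ?y + 2 * \<mu> * emu \<mu> (- ?y)))"
    by (intro sums_add sums_mult bbq_sums bb_sums assms)
  ultimately have "(\<lambda>k. (\<lambda>m. bb \<mu> ?y m * qq \<mu> n m ^ 2) (Suc k)) sums
     (x * (x * emu \<mu> ?y) + x / real n * (emu \<mu> ?y + 2 * \<mu> * emu \<mu> (- ?y)))"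
    by (simp only:)
  then show ?thesis by (rule sums_Suc_zero) (simp add: qq_def theta_def)
qed

lemma exp_sums': "(\<lambda>j. l ^ j / fact j) sums exp (l::real)"
  using exp_converges[of l] by (simp add: divide_inverse mult.commute)

lemma jexp_sums: "(\<lambda>j. real j * (l ^ j / fact j)) sums (l * exp (l::real))"
proof (rule sums_Suc_zero)
  show "(\<lambda>k. real (Suc k) * (l ^ Suc k / fact (Suc k))) sums (l * exp l)"
  proof -
    have "(\<lambda>k. real (Suc k) * (l ^ Suc k / fact (Suc k))) = (\<lambda>k. l * (l ^ k / fact k))"
    proof
      fix k
      have f: "fact (Suc k) = real (Suc k) * (fact k :: real)" by simp
      have "real (Suc k) > 0" "(fact k :: real) > 0" by auto
      have a: "\<And>r F L::real. r > 0 \<Longrightarrow> F > 0 \<Longrightarrow> r * (l * L / (r * F)) = l * (L / F)"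
        by (simp add: field_simps)
      show "real (Suc k) * (l ^ Suc k / fact (Suc k)) = l * (l ^ k / fact k)"
        unfolding f power_Suc using a[of "real (Suc k)" "fact k" "l^k"] by simp
    qed
    then show ?thesis using sums_mult[OF exp_sums'[of l], of l] by simp
  qed
qed simp

lemma j2exp_sums: "(\<lambda>j. real j ^ 2 * (l ^ j / fact j)) sums ((l^2 + l) * exp (l::real))"
proof (rule sums_Suc_zero)
  show "(\<lambda>k. real (Suc k) ^ 2 * (l ^ Suc k / fact (Suc k))) sums ((l^2 + l) * exp l)"
  proof -
    have "(\<lambda>k. real (Suc k) ^ 2 * (l ^ Suc k / fact (Suc k))) =
       (\<lambda>k. l * (real k * (l ^ k / fact k)) + l * (l ^ k / fact k))"
    proof
      fix k
      have f: "fact (Suc k) = real (Suc k) * (fact k :: real)" by simp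
      have "real (Suc k) > 0" "(fact k :: real) > 0" by auto
      have a: "\<And>r F L::real. r > 0 \<Longrightarrow> F > 0 \<Longrightarrow> r^2 * (l * L / (r * F)) = l * ((r - 1) * (L / F)) + l * (L / F)"
        by (simp add: field_simps power2_eq_square)
      show "real (Suc k) ^ 2 * (l ^ Suc k / fact (Suc k)) = l * (real k * (l ^ k / fact k)) + l * (l ^ k / fact k)"
        unfolding f power_Suc using a[of "real (Suc k)" "fact k" "l^k"] by simp
    qed
    moreover have "(\<lambda>k. l * (real k * (l ^ k / fact k)) + l * (l ^ k / fact k)) sums
        (l * (l * exp l) + l * exp l)"
      by (intro sums_add sums_mult jexp_sums exp_sums')
    ultimately show ?thesis by (simp add: algebra_simps power2_eq_square)
  qed
qed simp

lemma cc_reindex: assumes "(\<lambda>j. cc l (2*j) * F (2*j)) sums s" shows "(\<lambda>i. cc l i * F i) sums s"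
proof -
  have "strict_mono (\<lambda>j::nat. 2*j)" by (rule strict_monoI) simp
  moreover have "\<And>i. i \<notin> range (\<lambda>j::nat. 2*j) \<Longrightarrow> cc l i * F i = 0"
    unfolding cc_def by auto
  ultimately show ?thesis using sums_mono_reindex[of "\<lambda>j. 2*j" "\<lambda>i. cc l i * F i" s] assms by simp
qed

lemma cc0_sums: "cc l sums exp l"
proof -
  have "(\<lambda>i. cc l i * 1) sums exp l" by (rule cc_reindex) (use exp_sums'[of l] in \<open>simp add: cc_def\<close>)
  then show ?thesis by simp
qed

lemma cc1_sums: assumes "n > 0"
  shows "(\<lambda>i. cc l i * (real i / real n)) sums (2 * l * exp l / real n)"
proof (rule cc_reindex)
  have "(\<lambda>j. (2 / real n) * (real j * (l ^ j / fact j))) sums ((2 / real n) * (l * exp l))"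
    by (intro sums_mult jexp_sums)
  then show "(\<lambda>j. cc l (2*j) * (real (2*j) / real n)) sums (2 * l * exp l / real n)"
    by (simp add: cc_def field_simps)
qed

lemma cc2_sums: assumes "n > 0"
  shows "(\<lambda>i. cc l i * (real i / real n)^2) sums (4 * (l^2 + l) * exp l / real n ^ 2)"
proof (rule cc_reindex)
  have "(\<lambda>j. (4 / real n ^ 2) * (real j ^ 2 * (l ^ j / fact j))) sums ((4 / real n ^ 2) * ((l^2 + l) * exp l))"
    by (intro sums_mult j2exp_sums)
  then show "(\<lambda>j. cc l (2*j) * (real (2*j) / real n)^2) sums (4 * (l^2 + l) * exp l / real n ^ 2)"
    by (simp add: cc_def field_simps power2_eq_square)
qed

lemma bbc1_sums: assumes "\<mu> \<ge> 0" "n > 0"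
  shows "(\<lambda>m. bb \<mu> (real n * x) m * (qq \<mu> n m - x)) sums 0"
proof -
  have "(\<lambda>m. bb \<mu> (real n * x) m * qq \<mu> n m - x * bb \<mu> (real n * x) m) sums
     (x * emu \<mu> (real n * x) - x * emu \<mu> (real n * x))"
    by (intro sums_diff sums_mult bbq_sums bb_sums assms)
  then show ?thesis by (simp add: algebra_simps)
qed

lemma bbc2_sums: assumes "\<mu> \<ge> 0" "n > 0"
  shows "(\<lambda>m. bb \<mu> (real n * x) m * (qq \<mu> n m - x)^2) sums
     (x / real n * (emu \<mu> (real n * x) + 2 * \<mu> * emu \<mu> (- (real n * x))))"
proof -
  let ?y = "real n * x"
  have "(\<lambda>m. bb \<mu> ?y m * qq \<mu> n m ^ 2 - 2 * x * (bb \<mu> ?y m * qq \<mu> n m) + x^2 * bb \<mu> ?y m) sums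
     ((x * (x * emu \<mu> ?y) + x / real n * (emu \<mu> ?y + 2 * \<mu> * emu \<mu> (- ?y)))
       - 2 * x * (x * emu \<mu> ?y) + x^2 * emu \<mu> ?y)"
    by (intro sums_add sums_diff sums_mult bbq_sums bbq2_sums bb_sums assms)
  then show ?thesis by (simp add: algebra_simps power2_eq_square)
qed



lemma even_sum: "(\<Sum>i\<le>(k::nat). if even i then F i else (0::real)) = (\<Sum>j\<le>k div 2. F (2*j))"
proof (induction k)
  case 0 then show ?case by simp
next
  case (Suc k)
  show ?case
  proof (cases "even (Suc k)")
    case True
    then have "Suc k div 2 = Suc (k div 2)" "2 * Suc (k div 2) = Suc k" by presburger+
    then show ?thesis using Suc True by simp
  next
    case False
    then have "Suc k div 2 = k div 2" by presburger
    then show ?thesis using Suc False by simp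
  qed
qed

lemma hpol_eq: assumes "\<mu> \<ge> 0"
  shows "hpol \<mu> k (real n) \<alpha> / gam \<mu> k * x ^ k =
    (\<Sum>i\<le>k. cc (\<alpha> * x^2) i * bb \<mu> (real n * x) (k - i))"
proof -
  have g: "gam \<mu> k \<noteq> 0" using gam_pos[OF assms] by (metis less_irrefl)
  have "hpol \<mu> k (real n) \<alpha> / gam \<mu> k * x ^ k =
     (\<Sum>j\<le>k div 2. \<alpha> ^ j * real n ^ (k - 2*j) / (fact j * gam \<mu> (k - 2*j)) * x ^ k)"
  proof -
    have "hpol \<mu> k (real n) \<alpha> / gam \<mu> k =
      (\<Sum>j=0..k div 2. \<alpha> ^ j * real n ^ (k - 2*j) / (fact j * gam \<mu> (k - 2*j)))"
      unfolding hpol_def using g by simp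
    then show ?thesis by (simp only: atMost_atLeast0 sum_distrib_right)
  qed
  also have "\<dots> = (\<Sum>j\<le>k div 2. cc (\<alpha> * x^2) (2*j) * bb \<mu> (real n * x) (k - 2*j))"
  proof (rule sum.cong)
    fix j assume "j \<in> {..k div 2}"
    then have "k = 2*j + (k - 2*j)" by auto
    then have xk: "x ^ k = (x^2)^j * x^(k - 2*j)"
      by (metis power_add power_mult)
    show "\<alpha> ^ j * real n ^ (k - 2*j) / (fact j * gam \<mu> (k - 2*j)) * x ^ k
        = cc (\<alpha> * x^2) (2*j) * bb \<mu> (real n * x) (k - 2*j)"
      unfolding xk cc_def bb_def by (simp add: power_mult_distrib)
  qed auto
  also have "\<dots> = (\<Sum>i\<le>k. if even i then cc (\<alpha> * x^2) i * bb \<mu> (real n * x) (k - i) else 0)"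
    by (rule even_sum[symmetric])
  also have "\<dots> = (\<Sum>i\<le>k. cc (\<alpha> * x^2) i * bb \<mu> (real n * x) (k - i))"
    by (rule sum.cong) (auto simp: cc_def)
  finally show ?thesis .
qed

lemma point_eq: assumes "i \<le> k"
  shows "cc l i * b * f ((real k + 2 * \<mu> * theta k) / real n) =
         cc l i * b * f (qq \<mu> n (k - i) + real i / real n)"
proof (cases "even i")
  case True
  have "even (k - i) \<longleftrightarrow> even k" using True assms by presburger
  then have th: "theta (k - i) = theta k" unfolding theta_def by simp
  have "(real k + 2 * \<mu> * theta k) / real n = qq \<mu> n (k - i) + real i / real n"
    unfolding qq_def th using assms by (simp add: of_nat_diff add_divide_distrib diff_divide_distrib)
  then show ?thesis by (simp only:)
next
  case False then show ?thesis by (simp add: cc_def)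
qed



lemma cp: fixes A B :: "nat \<Rightarrow> real"
  assumes "summable (\<lambda>k. \<bar>A k\<bar>)" "summable (\<lambda>k. \<bar>B k\<bar>)" "A sums sa" "B sums sb"
  shows "(\<lambda>k. \<Sum>i\<le>k. A i * B (k-i)) sums (sa * sb)"
  using Cauchy_product_sums[of A B] assms by (simp add: sums_iff)

lemma abs_le_sq1: "\<bar>d::real\<bar> \<le> d^2 + 1"
proof (cases "\<bar>d\<bar> \<le> 1")
  case True then show ?thesis using zero_le_power2[of d] by linarith
next
  case False
  then have "\<bar>d\<bar> * 1 \<le> \<bar>d\<bar> * \<bar>d\<bar>" by (intro mult_left_mono) auto
  then show ?thesis by (simp add: power2_eq_square)
qed

lemma cc_nonneg: "l \<ge> 0 \<Longrightarrow> cc l i \<ge> 0" by (simp add: cc_def)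
lemma bb_nonneg: "\<mu> \<ge> 0 \<Longrightarrow> y \<ge> 0 \<Longrightarrow> bb \<mu> y m \<ge> 0"
  unfolding bb_def using gam_pos[of \<mu> m] by simp

lemma abs_sum_nonneg: "f sums s \<Longrightarrow> (\<And>k. f k \<ge> (0::real)) \<Longrightarrow> summable (\<lambda>k. \<bar>f k\<bar>)"
  by (simp add: sums_iff)

lemma main_sums:
  assumes mu: "\<mu> \<ge> 0" and n: "n > 0" and x: "x \<ge> 0" and l: "l \<ge> 0"
  defines "a \<equiv> \<lambda>k. \<Sum>i\<le>k. cc l i * bb \<mu> (real n * x) (k-i)"
  shows "a sums (exp l * emu \<mu> (real n * x))"
    and "(\<lambda>k. a k * ((real k + 2 * \<mu> * theta k) / real n - x)^2) sums
       (exp l * (x / real n * (emu \<mu> (real n * x) + 2 * \<mu> * emu \<mu> (- (real n * x))))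
        + 2 * ((2 * l * exp l / real n) * 0)
        + 4 * (l^2 + l) * exp l / real n ^ 2 * emu \<mu> (real n * x))"
proof -
  let ?y = "real n * x"
  have y: "?y \<ge> 0" using x by simp
  have bn: "\<And>m. bb \<mu> ?y m \<ge> 0" using bb_nonneg[OF mu y] .
  have c0: "summable (\<lambda>k. \<bar>cc l k\<bar>)" by (rule abs_sum_nonneg[OF cc0_sums]) (rule cc_nonneg[OF l])
  have c1: "summable (\<lambda>k. \<bar>cc l k * (real k / real n)\<bar>)"
    by (rule abs_sum_nonneg[OF cc1_sums[OF n]]) (simp add: cc_nonneg[OF l])
  have c2: "summable (\<lambda>k. \<bar>cc l k * (real k / real n)^2\<bar>)"
    by (rule abs_sum_nonneg[OF cc2_sums[OF n]]) (simp add: cc_nonneg[OF l])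
  have b0: "summable (\<lambda>k. \<bar>bb \<mu> ?y k\<bar>)" by (rule bb_abs_summable[OF mu])
  have b2: "summable (\<lambda>k. \<bar>bb \<mu> ?y k * (qq \<mu> n k - x)^2\<bar>)"
    by (rule abs_sum_nonneg[OF bbc2_sums[OF mu n]]) (simp add: bn)
  have b1: "summable (\<lambda>k. \<bar>bb \<mu> ?y k * (qq \<mu> n k - x)\<bar>)"
  proof (rule summable_comparison_test')
    show "summable (\<lambda>k. bb \<mu> ?y k * (qq \<mu> n k - x)^2 + bb \<mu> ?y k)"
      by (intro summable_add sums_summable[OF bbc2_sums[OF mu n, of x]] sums_summable[OF bb_sums[OF mu, of ?y]])
    fix k :: nat
    have "\<bar>qq \<mu> n k - x\<bar> \<le> (qq \<mu> n k - x)^2 + 1"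
      by (rule abs_le_sq1)
    then have "bb \<mu> ?y k * \<bar>qq \<mu> n k - x\<bar> \<le> bb \<mu> ?y k * ((qq \<mu> n k - x)^2 + 1)"
      using bn by (intro mult_left_mono) auto
    moreover have "norm \<bar>bb \<mu> ?y k * (qq \<mu> n k - x)\<bar> = bb \<mu> ?y k * \<bar>qq \<mu> n k - x\<bar>"
      using bn[of k] by (simp add: abs_mult)
    moreover have "bb \<mu> ?y k * ((qq \<mu> n k - x)^2 + 1) = bb \<mu> ?y k * (qq \<mu> n k - x)^2 + bb \<mu> ?y k"
      by (simp add: distrib_left)
    ultimately show "norm \<bar>bb \<mu> ?y k * (qq \<mu> n k - x)\<bar> \<le> bb \<mu> ?y k * (qq \<mu> n k - x)^2 + bb \<mu> ?y k"
      by linarith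
  qed
  show "a sums (exp l * emu \<mu> ?y)"
    unfolding a_def by (rule cp[OF c0 b0 cc0_sums bb_sums[OF mu]])
  have S1: "(\<lambda>k. \<Sum>i\<le>k. cc l i * (bb \<mu> ?y (k-i) * (qq \<mu> n (k-i) - x)^2)) sums
      (exp l * (x / real n * (emu \<mu> ?y + 2 * \<mu> * emu \<mu> (- ?y))))"
    by (rule cp[OF c0 b2 cc0_sums bbc2_sums[OF mu n]])
  have S2: "(\<lambda>k. \<Sum>i\<le>k. (cc l i * (real i / real n)) * (bb \<mu> ?y (k-i) * (qq \<mu> n (k-i) - x))) sums
      ((2 * l * exp l / real n) * 0)"
    by (rule cp[OF c1 b1 cc1_sums[OF n] bbc1_sums[OF mu n]])
  have S3: "(\<lambda>k. \<Sum>i\<le>k. (cc l i * (real i / real n)^2) * bb \<mu> ?y (k-i)) sums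
      (4 * (l^2 + l) * exp l / real n ^ 2 * emu \<mu> ?y)"
    by (rule cp[OF c2 b0 cc2_sums[OF n] bb_sums[OF mu]])
  have S: "(\<lambda>k. (\<Sum>i\<le>k. cc l i * (bb \<mu> ?y (k-i) * (qq \<mu> n (k-i) - x)^2))
        + 2 * (\<Sum>i\<le>k. (cc l i * (real i / real n)) * (bb \<mu> ?y (k-i) * (qq \<mu> n (k-i) - x)))
        + (\<Sum>i\<le>k. (cc l i * (real i / real n)^2) * bb \<mu> ?y (k-i))) sums
      (exp l * (x / real n * (emu \<mu> ?y + 2 * \<mu> * emu \<mu> (- ?y)))
        + 2 * ((2 * l * exp l / real n) * 0)
        + 4 * (l^2 + l) * exp l / real n ^ 2 * emu \<mu> ?y)"
    by (intro sums_add sums_mult S1 S2 S3)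
  have E: "a k * ((real k + 2 * \<mu> * theta k) / real n - x)^2 =
      (\<Sum>i\<le>k. cc l i * (bb \<mu> ?y (k-i) * (qq \<mu> n (k-i) - x)^2))
        + 2 * (\<Sum>i\<le>k. (cc l i * (real i / real n)) * (bb \<mu> ?y (k-i) * (qq \<mu> n (k-i) - x)))
        + (\<Sum>i\<le>k. (cc l i * (real i / real n)^2) * bb \<mu> ?y (k-i))" (is "_ = ?R") for k
  proof -
    have "a k * ((real k + 2 * \<mu> * theta k) / real n - x)^2 =
       (\<Sum>i\<le>k. cc l i * bb \<mu> ?y (k-i) * ((real k + 2 * \<mu> * theta k) / real n - x)^2)"
      unfolding a_def by (simp add: sum_distrib_right)
    also have "\<dots> = (\<Sum>i\<le>k. cc l i * bb \<mu> ?y (k-i) * (qq \<mu> n (k-i) + real i / real n - x)^2)"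
      by (rule sum.cong[OF refl]) (rule point_eq[where f = "\<lambda>t. (t - x)^2"], simp)
    also have "\<dots> = (\<Sum>i\<le>k. cc l i * (bb \<mu> ?y (k-i) * (qq \<mu> n (k-i) - x)^2)
        + 2 * ((cc l i * (real i / real n)) * (bb \<mu> ?y (k-i) * (qq \<mu> n (k-i) - x)))
        + (cc l i * (real i / real n)^2) * bb \<mu> ?y (k-i))"
      by (rule sum.cong[OF refl]) (simp add: power2_eq_square algebra_simps)
    also have "\<dots> = ?R"
      by (simp add: sum.distrib sum_distrib_left)
    finally show ?thesis .
  qed
  show "(\<lambda>k. a k * ((real k + 2 * \<mu> * theta k) / real n - x)^2) sums
       (exp l * (x / real n * (emu \<mu> ?y + 2 * \<mu> * emu \<mu> (- ?y)))
        + 2 * ((2 * l * exp l / real n) * 0)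
        + 4 * (l^2 + l) * exp l / real n ^ 2 * emu \<mu> ?y)"
    unfolding E using S .
qed



lemma chain:
  fixes g :: "real \<Rightarrow> real"
  assumes C: "\<And>u v. u \<ge> 0 \<Longrightarrow> v \<ge> 0 \<Longrightarrow> \<bar>u - v\<bar> \<le> h \<Longrightarrow> \<bar>g u - g v\<bar> \<le> C"
    and h0: "h \<ge> 0"
  shows "s \<ge> 0 \<Longrightarrow> t \<ge> 0 \<Longrightarrow> \<bar>s - t\<bar> \<le> real N * h \<Longrightarrow> \<bar>g s - g t\<bar> \<le> real N * C"
proof (induction N arbitrary: s t)
  case 0 then show ?case by simp
next
  case (Suc N)
  have C0: "C \<ge> 0" using C[of 0 0] h0 by simp
  define r where "r = real N"
  have r: "r \<ge> 0" unfolding r_def by simp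
  define u where "u = (s + r * t) / (r + 1)"
  have u0: "u \<ge> 0" unfolding u_def using Suc.prems r by simp
  have su: "s - u = r * (s - t) / (r + 1)" unfolding u_def using r by (simp add: field_simps)
  have ut: "u - t = (s - t) / (r + 1)" unfolding u_def using r by (simp add: field_simps)
  have st: "\<bar>s - t\<bar> \<le> (r + 1) * h" using Suc.prems(3) unfolding r_def by (simp add: algebra_simps)
  have "\<bar>s - u\<bar> = r * (\<bar>s - t\<bar> / (r + 1))" unfolding su using r by (simp add: abs_mult)
  also have "\<dots> \<le> r * h" using st r by (intro mult_left_mono) (auto simp: divide_le_eq mult.commute)
  finally have 1: "\<bar>g s - g u\<bar> \<le> r * C" using Suc.IH[OF Suc.prems(1) u0] unfolding r_def by blast
  have "\<bar>u - t\<bar> = \<bar>s - t\<bar> / (r + 1)" unfolding ut using r by simp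
  also have "\<dots> \<le> h" using st r by (auto simp: divide_le_eq mult.commute)
  finally have 2: "\<bar>g u - g t\<bar> \<le> C" using C[OF u0 Suc.prems(2)] by blast
  have "\<bar>g s - g t\<bar> \<le> \<bar>g s - g u\<bar> + \<bar>g u - g t\<bar>" by linarith
  also have "\<dots> \<le> r * C + C" using 1 2 by linarith
  finally show ?case unfolding r_def by (simp add: algebra_simps)
qed

lemma mod_bdd:
  fixes g :: "real \<Rightarrow> real"
  assumes "uniformly_continuous_on {0..} g"
  shows "bdd_above {\<bar>g s - g t\<bar> | s t. s \<ge> 0 \<and> t \<ge> 0 \<and> \<bar>s - t\<bar> \<le> \<delta>}"
proof -
  obtain d where d: "d > 0" and D: "\<forall>x\<in>{0..}. \<forall>x'\<in>{0..}. dist x' x < d \<longrightarrow> dist (g x') (g x) < 1"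
    using assms unfolding uniformly_continuous_on_def by (meson zero_less_one)
  define h where "h = d / 2"
  have h: "h > 0" using d unfolding h_def by simp
  have C: "\<bar>g u - g v\<bar> \<le> 1" if "u \<ge> 0" "v \<ge> 0" "\<bar>u - v\<bar> \<le> h" for u v
  proof -
    have "dist u v < d" using that h unfolding h_def dist_real_def by simp
    then have "dist (g u) (g v) < 1" using D that by auto
    then show ?thesis by (simp add: dist_real_def)
  qed
  define N where "N = nat \<lceil>\<delta> / h\<rceil>"
  have "\<delta> / h \<le> real N" unfolding N_def by (rule real_nat_ceiling_ge)
  then have Nh: "\<delta> \<le> real N * h" using h by (simp add: divide_le_eq)
  show ?thesis
  proof (rule bdd_aboveI[where M = "real N"])
    fix z assume "z \<in> {\<bar>g s - g t\<bar> | s t. s \<ge> 0 \<and> t \<ge> 0 \<and> \<bar>s - t\<bar> \<le> \<delta>}"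
    then obtain s t where z: "z = \<bar>g s - g t\<bar>" "s \<ge> 0" "t \<ge> 0" "\<bar>s - t\<bar> \<le> \<delta>" by blast
    show "z \<le> real N" using chain[of h g 1, OF C _ z(2,3), of N] h z Nh by simp
  qed
qed

lemma mod_le:
  fixes g :: "real \<Rightarrow> real"
  assumes "uniformly_continuous_on {0..} g" "s \<ge> 0" "t \<ge> 0" "\<bar>s - t\<bar> \<le> \<delta>"
  shows "\<bar>g s - g t\<bar> \<le> modcont g \<delta>"
  unfolding modcont_def by (rule cSup_upper) (use assms mod_bdd[OF assms(1)] in auto)

lemma mod_ineq:
  fixes g :: "real \<Rightarrow> real"
  assumes uc: "uniformly_continuous_on {0..} g" and "\<delta> > 0" "s \<ge> 0" "t \<ge> 0"
  shows "\<bar>g s - g t\<bar> \<le> (1 + \<bar>s - t\<bar> / \<delta>) * modcont g \<delta>"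
proof -
  have w0: "modcont g \<delta> \<ge> 0" using mod_le[OF uc, of 0 0 \<delta>] assms by simp
  define N where "N = nat \<lceil>\<bar>s - t\<bar> / \<delta>\<rceil>"
  have z0: "\<bar>s - t\<bar> / \<delta> \<ge> 0" using assms by simp
  then have "real N = real_of_int \<lceil>\<bar>s - t\<bar> / \<delta>\<rceil>" unfolding N_def by simp
  then have N1: "real N \<le> 1 + \<bar>s - t\<bar> / \<delta>"
    using of_int_ceiling_le_add_one[of "\<bar>s - t\<bar> / \<delta>"] by linarith
  have "\<bar>s - t\<bar> / \<delta> \<le> real N" unfolding N_def by (rule real_nat_ceiling_ge)
  then have N2: "\<bar>s - t\<bar> \<le> real N * \<delta>" using assms by (simp add: divide_le_eq)
  have "\<bar>g s - g t\<bar> \<le> real N * modcont g \<delta>"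
    by (rule chain[of \<delta> g "modcont g \<delta>"]) (use mod_le[OF uc] assms N2 in auto)
  also have "\<dots> \<le> (1 + \<bar>s - t\<bar> / \<delta>) * modcont g \<delta>" by (rule mult_right_mono[OF N1 w0])
  finally show ?thesis .
qed



theorem theorem7:
  fixes \<alpha> \<mu> x :: real and n :: nat and g :: "real \<Rightarrow> real"
  assumes "\<alpha> \<ge> 0" "\<mu> \<ge> 0" "uniformly_continuous_on {0..} g" "n \<ge> 1" "x \<ge> 0"
  shows "\<bar>Top \<alpha> \<mu> n g x - g x\<bar> \<le>
    (1 + sqrt (1 / real n * x * (4 * x^3 * \<alpha>^2 + 4 * x * \<alpha> + real n)
               + 2 * \<mu> * x * (emu \<mu> (- real n * x) / emu \<mu> (real n * x))))
    * modcont g (1 / sqrt (real n))"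
proof -
  note mu = assms(2) and uc = assms(3) and x0 = assms(5)
  have n0: "n > 0" using assms(4) by simp
  define l where "l = \<alpha> * x^2"
  have l0: "l \<ge> 0" unfolding l_def using assms(1) by simp
  define y where "y = real n * x"
  have y0: "y \<ge> 0" unfolding y_def using x0 by simp
  define a where "a = (\<lambda>k. \<Sum>i\<le>k. cc l i * bb \<mu> y (k-i))"
  define p where "p = (\<lambda>k. (real k + 2 * \<mu> * theta k) / real n)"
  define ep where "ep = emu \<mu> y"
  define em where "em = emu \<mu> (- y)"
  define E where "E = exp l * ep"
  define V where "V = exp l * (x / real n * (ep + 2 * \<mu> * em))
        + 2 * ((2 * l * exp l / real n) * 0)
        + 4 * (l^2 + l) * exp l / real n ^ 2 * ep"
  have aS: "a sums E" unfolding a_def E_def ep_def y_def by (rule main_sums(1)[OF mu n0 x0 l0])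
  have vS: "(\<lambda>k. a k * (p k - x)^2) sums V"
    unfolding a_def V_def p_def ep_def em_def y_def by (rule main_sums(2)[OF mu n0 x0 l0])
  have a0: "a k \<ge> 0" for k
    unfolding a_def by (intro sum_nonneg mult_nonneg_nonneg cc_nonneg[OF l0] bb_nonneg[OF mu y0])
  have p0: "p k \<ge> 0" for k unfolding p_def theta_def using mu by simp
  have ep0: "ep > 0"
  proof -
    have "0 < suminf (bb \<mu> y)"
      by (rule suminf_pos2[of _ 0]) (use bb_sums[OF mu, of y] bb_nonneg[OF mu y0] in
         \<open>auto simp: sums_iff bb_def gam0[OF mu]\<close>)
    then show ?thesis unfolding ep_def using bb_sums[OF mu, of y] by (simp add: sums_iff)
  qed
  have E0: "E > 0" unfolding E_def using ep0 by simp
  have Top_eq: "Top \<alpha> \<mu> n g x = 1 / E * (\<Sum>k. a k * g (p k))"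
    unfolding Top_def hpol_eq[OF mu] E_def ep_def a_def p_def l_def y_def by simp
  define \<delta> where "\<delta> = 1 / sqrt (real n)"
  have d0: "\<delta> > 0" unfolding \<delta>_def using n0 by simp
  define \<omega> where "\<omega> = modcont g \<delta>"
  have w0: "\<omega> \<ge> 0" unfolding \<omega>_def using mod_le[OF uc, of 0 0 \<delta>] d0 by simp
  have sqn: "sqrt (real n) > 0" using n0 by simp
  have bound: "\<bar>g (p k) - g x\<bar> \<le> (1 + sqrt (real n) * \<bar>p k - x\<bar>) * \<omega>" for k
  proof -
    have "\<bar>p k - x\<bar> / \<delta> = sqrt (real n) * \<bar>p k - x\<bar>" unfolding \<delta>_def by simp
    then show ?thesis using mod_ineq[OF uc d0 p0[of k] x0] unfolding \<omega>_def by simp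
  qed
  have sA: "summable (\<lambda>k. a k * \<bar>p k - x\<bar>)"
  proof (rule summable_comparison_test')
    show "summable (\<lambda>k. a k * (p k - x)^2 + a k)"
      by (intro summable_add sums_summable[OF vS] sums_summable[OF aS])
    fix k :: nat
    have "a k * \<bar>p k - x\<bar> \<le> a k * ((p k - x)^2 + 1)"
      by (rule mult_left_mono[OF abs_le_sq1 a0])
    then show "norm (a k * \<bar>p k - x\<bar>) \<le> a k * (p k - x)^2 + a k"
      using a0[of k] by (simp add: distrib_left)
  qed
  define A where "A = (\<Sum>k. a k * \<bar>p k - x\<bar>)"
  have AS: "(\<lambda>k. a k * \<bar>p k - x\<bar>) sums A" unfolding A_def using sA by (simp add: summable_sums)
  have A0: "A \<ge> 0" unfolding A_def using a0 by (intro suminf_nonneg sA) simp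
  have BS: "(\<lambda>k. \<omega> * a k + \<omega> * sqrt (real n) * (a k * \<bar>p k - x\<bar>)) sums (\<omega> * E + \<omega> * sqrt (real n) * A)"
    by (intro sums_add sums_mult aS AS)
  have Dle: "a k * \<bar>g (p k) - g x\<bar> \<le> \<omega> * a k + \<omega> * sqrt (real n) * (a k * \<bar>p k - x\<bar>)" for k
  proof -
    have "a k * \<bar>g (p k) - g x\<bar> \<le> a k * ((1 + sqrt (real n) * \<bar>p k - x\<bar>) * \<omega>)"
      by (rule mult_left_mono[OF bound a0])
    then show ?thesis by (simp add: algebra_simps)
  qed
  have sD: "summable (\<lambda>k. a k * \<bar>g (p k) - g x\<bar>)"
    by (rule summable_comparison_test'[OF sums_summable[OF BS]]) (use Dle a0 in \<open>auto simp: abs_mult\<close>)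
  have Dsum: "(\<Sum>k. a k * \<bar>g (p k) - g x\<bar>) \<le> \<omega> * E + \<omega> * sqrt (real n) * A"
    using suminf_le[OF Dle sD sums_summable[OF BS]] BS by (simp add: sums_iff)
  have sG: "summable (\<lambda>k. a k * (g (p k) - g x))"
    by (rule summable_rabs_cancel) (use sD a0 in \<open>simp add: abs_mult\<close>)
  have Gabs: "\<bar>\<Sum>k. a k * (g (p k) - g x)\<bar> \<le> (\<Sum>k. a k * \<bar>g (p k) - g x\<bar>)"
  proof -
    have "\<bar>\<Sum>k. a k * (g (p k) - g x)\<bar> \<le> (\<Sum>k. \<bar>a k * (g (p k) - g x)\<bar>)"
      by (rule summable_rabs) (use sD a0 in \<open>simp add: abs_mult\<close>)
    also have "\<dots> = (\<Sum>k. a k * \<bar>g (p k) - g x\<bar>)" using a0 by (simp add: abs_mult)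
    finally show ?thesis .
  qed
  have Gsum: "(\<Sum>k. a k * g (p k)) = (\<Sum>k. a k * (g (p k) - g x)) + g x * E"
  proof -
    have "(\<lambda>k. a k * (g (p k) - g x) + g x * a k) sums ((\<Sum>k. a k * (g (p k) - g x)) + g x * E)"
      by (intro sums_add sums_mult aS summable_sums sG)
    moreover have "(\<lambda>k. a k * (g (p k) - g x) + g x * a k) = (\<lambda>k. a k * g (p k))"
      by (rule ext) (simp add: algebra_simps)
    ultimately show ?thesis by (simp add: sums_iff)
  qed
  have T1: "\<bar>Top \<alpha> \<mu> n g x - g x\<bar> \<le> \<omega> * (1 + sqrt (real n) * (A / E))"
  proof -
    have "Top \<alpha> \<mu> n g x - g x = (\<Sum>k. a k * (g (p k) - g x)) / E"
      unfolding Top_eq Gsum using E0 by (simp add: field_simps)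
    then have "\<bar>Top \<alpha> \<mu> n g x - g x\<bar> = \<bar>\<Sum>k. a k * (g (p k) - g x)\<bar> / E" using E0 by simp
    also have "\<dots> \<le> (\<omega> * E + \<omega> * sqrt (real n) * A) / E"
      using Gabs Dsum E0 by (intro divide_right_mono) auto
    also have "\<dots> = \<omega> * (1 + sqrt (real n) * (A / E))" using E0 by (simp add: field_simps)
    finally show ?thesis .
  qed
  have V0: "V \<ge> 0"
  proof -
    have "0 \<le> (\<Sum>k. a k * (p k - x)^2)" by (rule suminf_nonneg) (use vS a0 in \<open>auto simp: sums_iff\<close>)
    then show ?thesis using vS by (simp add: sums_iff)
  qed
  define m where "m = V / E"
  have m0: "m \<ge> 0" unfolding m_def using V0 E0 by simp
  have Ac: "A \<le> V / (2 * c) + c * E / 2" if c: "c > 0" for c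
  proof -
    have le: "a k * \<bar>p k - x\<bar> \<le> (1 / (2 * c)) * (a k * (p k - x)^2) + (c / 2) * a k" for k
    proof -
      have "\<bar>p k - x\<bar> \<le> (p k - x)^2 / (2 * c) + c / 2"
      proof -
        have "0 \<le> (\<bar>p k - x\<bar> - c)^2" by simp
        then have "2 * c * \<bar>p k - x\<bar> \<le> (p k - x)^2 + c^2"
          by (simp add: power2_eq_square algebra_simps abs_mult_self_eq)
        then show ?thesis using c by (simp add: field_simps power2_eq_square)
      qed
      from mult_left_mono[OF this a0[of k]] show ?thesis by (simp add: algebra_simps)
    qed
    have "(\<lambda>k. (1 / (2 * c)) * (a k * (p k - x)^2) + (c / 2) * a k) sums ((1 / (2 * c)) * V + (c / 2) * E)"
      by (intro sums_add sums_mult vS aS)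
    then have "A \<le> (1 / (2 * c)) * V + (c / 2) * E"
      using suminf_le[OF le sA] AS by (auto simp: sums_iff)
    then show ?thesis by simp
  qed
  have CS: "A / E \<le> sqrt m"
  proof (cases "m > 0")
    case True
    have "A \<le> V / (2 * sqrt m) + sqrt m * E / 2" using Ac[of "sqrt m"] True by simp
    also have "V = m * E" unfolding m_def using E0 by simp
    also have "m * E / (2 * sqrt m) + sqrt m * E / 2 = sqrt m * E"
    proof -
      have "m = sqrt m * sqrt m" using m0 by simp
      then show ?thesis using True by (simp add: field_simps)
    qed
    finally show ?thesis using E0 by (simp add: divide_le_eq mult.commute)
  next
    case False
    then have "m = 0" using m0 by simp
    then have V00: "V = 0" unfolding m_def using E0 by simp
    have "A \<le> 0"
    proof (rule ccontr)
      assume "\<not> A \<le> 0"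
      then have "A / E > 0" using E0 by simp
      from Ac[OF this] have "A \<le> A / 2" unfolding V00 using E0 by simp
      then show False using \<open>\<not> A \<le> 0\<close> by simp
    qed
    then show ?thesis using A0 E0 \<open>m = 0\<close> by simp
  qed
  have Req: "real n * m = 1 / real n * x * (4 * x^3 * \<alpha>^2 + 4 * x * \<alpha> + real n)
               + 2 * \<mu> * x * (emu \<mu> (- real n * x) / emu \<mu> (real n * x))"
  proof -
    have em': "emu \<mu> (- real n * x) = em" unfolding em_def y_def by simp
    have ep': "emu \<mu> (real n * x) = ep" unfolding ep_def y_def by simp
    have "exp l > 0" by simp
    then show ?thesis unfolding m_def V_def E_def em' ep' l_def using ep0 n0
      by (simp add: field_simps power2_eq_square power3_eq_cube)
  qed
  have "\<bar>Top \<alpha> \<mu> n g x - g x\<bar> \<le> \<omega> * (1 + sqrt (real n) * sqrt m)"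
    using T1 CS w0 sqn by (smt (verit) mult_left_mono)
  also have "sqrt (real n) * sqrt m = sqrt (real n * m)" by (simp add: real_sqrt_mult)
  finally show ?thesis unfolding Req \<omega>_def \<delta>_def by (simp add: mult.commute)
qed


end
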